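(* Let $V\in L^1(\mathbb{R}^3)$ be real-valued, $\lambda>0$, and for $\varepsilon\in(0,1]$ let $A^{(\lambda)}_\varepsilon$, $C^{(\lambda)}_\varepsilon$ be the operators on $L^2(\mathbb{R}^3)$ with integral kernels $A^{(\lambda)}_\varepsilon(x,y)=G_\lambda(x-\varepsilon y)\sqrt{|V(y)|}$ and $C^{(\lambda)}_\varepsilon(x,y)=\mathrm{sign}(V(x))\sqrt{|V(x)|}\,G_\lambda(\varepsilon x-y)$. Then, as $\varepsilon\downarrow0$, $$A^{(\lambda)}_\varepsilon\to A^{(\lambda)}:=\big|G_\lambda\big\rangle\big\langle\sqrt{|V|}\big|,\qquad C^{(\lambda)}_\varepsilon\to C^{(\lambda)}:=\big|\mathrm{sign}(V)\sqrt{|V|}\big\rangle\big\langle G_\lambda\big|$$ in Hilbert–Schmidt norm.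
   Context: $G_\lambda(x):=\frac{e^{-|x|\sqrt\lambda}}{4\pi|x|}$ on $\mathbb{R}^3$. For $f,g\in L^2(\mathbb{R}^3)$, $|f\rangle\langle g|$ denotes the rank-one operator $h\mapsto\big(\int_{\mathbb{R}^3}\overline{g}\,h\,\mathrm{d}x\big)f$. *)

theory Defs
  imports "HOL-Analysis.Analysis"
begin

text \<open>Yukawa-type Green function G_lambda(x) = exp(-|x| sqrt lambda) / (4 pi |x|) on R^3
  (value at x = 0 is irrelevant: a null set; Isabelle's division by zero gives 0).\<close>
definition G :: "real \<Rightarrow> real^3 \<Rightarrow> real" where
  "G lam x = exp (- norm x * sqrt lam) / (4 * pi * norm x)"

text \<open>Integral kernel of the rank-one operator |f><g| : h \<mapsto> (\<integral> conj(g) h) f,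
  namely (x,y) \<mapsto> f x * conj (g y) (all functions here are real-valued).\<close>
definition rank_one_kernel :: "(real^3 \<Rightarrow> real) \<Rightarrow> (real^3 \<Rightarrow> real) \<Rightarrow> real^3 \<Rightarrow> real^3 \<Rightarrow> real" where
  "rank_one_kernel f g x y = f x * g y"

text \<open>Squared Hilbert-Schmidt norm of the integral operator on L^2(R^3) with kernel K:
  the squared L^2(R^3 x R^3) norm of K (possibly infinite).\<close>
definition hs_norm_sq :: "(real^3 \<Rightarrow> real^3 \<Rightarrow> real) \<Rightarrow> ennreal" where
  "hs_norm_sq K = (\<integral>\<^sup>+ p. ennreal ((K (fst p) (snd p))\<^sup>2) \<partial>lborel)"

definition A_kernel :: "(real^3 \<Rightarrow> real) \<Rightarrow> real \<Rightarrow> real \<Rightarrow> real^3 \<Rightarrow> real^3 \<Rightarrow> real" where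
  "A_kernel V lam eps x y = G lam (x - eps *\<^sub>R y) * sqrt \<bar>V y\<bar>"

definition C_kernel :: "(real^3 \<Rightarrow> real) \<Rightarrow> real \<Rightarrow> real \<Rightarrow> real^3 \<Rightarrow> real^3 \<Rightarrow> real" where
  "C_kernel V lam eps x y = sgn (V x) * sqrt \<bar>V x\<bar> * G lam (eps *\<^sub>R x - y)"

end

theory Submission
  imports Defs
begin

lemma G_nonneg: "lam > 0 \<Longrightarrow> G lam x \<ge> 0"
  unfolding G_def by simp

lemma G_minus: "G lam (x - y) = G lam (y - x)"
  unfolding G_def by (simp add: norm_minus_commute)

lemma G_meas[measurable]: "G lam \<in> borel_measurable borel"
  unfolding G_def by measurable

lemma G_meas_lborel[measurable]: "G lam \<in> borel_measurable lborel"
  unfolding G_def by measurable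

lemma G_cont: "x \<noteq> 0 \<Longrightarrow> isCont (G lam) x"
  unfolding G_def by (intro continuous_intros) auto

lemma G_sq_le:
  assumes "lam > 0" "x \<noteq> 0"
  shows "(G lam x)\<^sup>2 \<le> 1 / (norm x)\<^sup>2" "(G lam x)\<^sup>2 \<le> (1 / lam) / (norm x)^4"
proof -
  define r where "r = norm x"
  define a where "a = sqrt lam"
  have r: "r > 0" using assms r_def by auto
  have a: "a > 0" using assms a_def by auto
  have Gx: "G lam x = exp (- r * a) / (4 * pi * r)" unfolding G_def r_def a_def by simp
  have e1: "exp (- r * a) \<le> 1" using r a by simp
  have e0: "exp (- r * a) > 0" by simp
  have pi4: "4 * pi \<ge> 1" using pi_gt3 by linarith
  have "G lam x \<le> 1 / r"
  proof -
    have "exp (- r * a) / (4 * pi * r) \<le> 1 / (4*pi*r)" using e1 r by (simp add: divide_right_mono)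
    also have "\<dots> \<le> 1 / r" using r pi4 by (simp add: frac_le)
    finally show ?thesis using Gx by simp
  qed
  moreover have "G lam x \<ge> 0" using G_nonneg assms by blast
  ultimately have "(G lam x)\<^sup>2 \<le> (1/r)\<^sup>2" by (intro power_mono) auto
  then show "(G lam x)\<^sup>2 \<le> 1 / (norm x)\<^sup>2" by (simp add: r_def power_divide)
  have "exp (r * a) \<ge> r * a" using exp_ge_add_one_self[of "r*a"] by linarith
  then have "exp (- r * a) \<le> 1 / (r * a)" using r a
    by (simp add: exp_minus field_simps)
  then have "G lam x \<le> 1 / (r * a) / r"
  proof -
    assume h: "exp (- r * a) \<le> 1 / (r * a)"
    have "exp (- r * a) / (4 * pi * r) \<le> (1 / (r*a)) / (4*pi*r)" by (rule divide_right_mono[OF h]) (use r in simp)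
    also have "\<dots> \<le> 1 / (r*a) / r" using r a pi4 by (simp add: frac_le)
    finally show ?thesis using Gx by simp
  qed
  with \<open>G lam x \<ge> 0\<close> have "(G lam x)\<^sup>2 \<le> (1 / (r * a) / r)\<^sup>2" by (intro power_mono) auto
  also have "\<dots> = (1 / lam) / r^4" using a assms unfolding a_def
    by (simp add: power2_eq_square field_simps power4_eq_xxxx)
  finally show "(G lam x)\<^sup>2 \<le> (1 / lam) / (norm x)^4" by (simp add: r_def)
qed

lemma dyadic_large:
  assumes "1 \<le> (r::real)" shows "\<exists>k::nat. 2^k \<le> r \<and> r < 2^(Suc k)"
proof -
  define k where "k = \<lfloor>log 2 r\<rfloor>"
  have h: "2 powr k \<le> r \<and> r < 2 powr (k+1)" using floor_log_eq_powr_iff[of r 2 k] assms k_def by auto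
  have "k \<ge> 0" using assms k_def by simp
  then obtain n where n: "k = int n" using nonneg_int_cases by blast
  have "2 powr k = 2^n" using n by (simp add: powr_realpow)
  moreover have "2 powr (k+1) = 2^(Suc n)"
  proof -
    have "real_of_int (k+1) = real (Suc n)" using n by simp
    then show ?thesis by (metis powr_realpow zero_less_numeral)
  qed
  ultimately show ?thesis using h by metis
qed

lemma dyadic_small:
  assumes "0 < (r::real)" "r < 1" shows "\<exists>k::nat. (1/2)^(Suc k) < r \<and> r \<le> (1/2)^k"
proof -
  obtain k::nat where k: "2^k \<le> 1/r" "1/r < 2^(Suc k)" using dyadic_large[of "1/r"] assms by auto
  have "r \<le> (1/2)^k" using k(1) assms by (simp add: power_one_over field_simps)
  moreover have "(1/2)^(Suc k) < r" using k(2) assms by (simp add: power_one_over field_simps)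
  ultimately show ?thesis by blast
qed

lemma cball_measure:
  assumes "0 \<le> \<rho>"
  shows "emeasure lborel (cball (0::real^3) \<rho>) \<le> ennreal (8 * \<rho>^3)"
proof -
  have sub: "cball (0::real^3) \<rho> \<subseteq> cbox (- (\<rho> *\<^sub>R One)) (\<rho> *\<^sub>R One)"
  proof
    fix x :: "real^3" assume "x \<in> cball 0 \<rho>"
    then have "norm x \<le> \<rho>" by simp
    then have "\<bar>x \<bullet> b\<bar> \<le> \<rho>" if "b \<in> Basis" for b
      using Basis_le_norm[OF that, of x] by linarith
    then show "x \<in> cbox (- (\<rho> *\<^sub>R One)) (\<rho> *\<^sub>R One)"
      by (force simp: mem_box(2) abs_le_iff)
  qed
  have "emeasure lborel (cball (0::real^3) \<rho>) \<le> emeasure lborel (cbox (- (\<rho> *\<^sub>R One)) (\<rho> *\<^sub>R One::real^3))"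
    by (rule emeasure_mono[OF sub]) simp
  also have "\<dots> = ennreal (\<Prod>b\<in>(Basis::(real^3) set). (\<rho> *\<^sub>R One - - (\<rho> *\<^sub>R One)) \<bullet> b)"
    using assms by (subst emeasure_lborel_cbox_eq) (auto simp: inner_diff_left)
  also have "(\<Prod>b\<in>(Basis::(real^3) set). (\<rho> *\<^sub>R One - - (\<rho> *\<^sub>R One)) \<bullet> b) = (\<Prod>b\<in>(Basis::(real^3) set). 2 * \<rho>)"
  proof (intro prod.cong refl)
    fix b :: "real^3" assume b: "b \<in> Basis"
    have "(\<rho> *\<^sub>R One) \<bullet> b = \<rho>" using b by simp
    then show "(\<rho> *\<^sub>R One - - (\<rho> *\<^sub>R One)) \<bullet> b = 2 * \<rho>"
      by (metis inner_diff_left inner_minus_left mult_2 diff_minus_eq_add)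
  qed
  also have "\<dots> = 8 * \<rho>^3" by (simp add: power_mult_distrib)
  finally show ?thesis by simp
qed

definition w1 :: "real^3 \<Rightarrow> ennreal" where
  "w1 x = (\<Sum>k. ennreal (4^(Suc k)) * indicator (cball 0 ((1/2)^k)) x)"
definition w2 :: "real^3 \<Rightarrow> ennreal" where
  "w2 x = (\<Sum>k. ennreal ((1/16)^k) * indicator (cball 0 (2^(Suc k))) x)"

lemma ennreal_term_le_suminf: "(f::nat \<Rightarrow> ennreal) j \<le> suminf f"
  using sum_le_suminf[of f "{j}"] by (simp add: summableI)

lemma cball_sets[measurable]: "cball (0::real^3) r \<in> sets borel"
  by (simp add: borel_closed)

lemma w1_meas[measurable]: "w1 \<in> borel_measurable lborel"
  unfolding w1_def by measurable
lemma w2_meas[measurable]: "w2 \<in> borel_measurable lborel"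
  unfolding w2_def by measurable

lemma w1_int: "(\<integral>\<^sup>+x. w1 x \<partial>lborel) < \<infinity>"
proof -
  have "(\<integral>\<^sup>+x. w1 x \<partial>lborel) = (\<Sum>k. \<integral>\<^sup>+x. ennreal (4^(Suc k)) * indicator (cball (0::real^3) ((1/2)^k)) x \<partial>lborel)"
  proof -
    have "(\<integral>\<^sup>+(x::real^3). (\<Sum>k. ennreal (4^(Suc k)) * indicator (cball 0 ((1/2)^k)) x) \<partial>lborel) = (\<Sum>k. \<integral>\<^sup>+x. ennreal (4^(Suc k)) * indicator (cball (0::real^3) ((1/2)^k)) x \<partial>lborel)"
      by (rule nn_integral_suminf[where f="\<lambda>k x. ennreal (4^(Suc k)) * indicator (cball 0 ((1/2)^k)) x"]) measurable
    then show ?thesis unfolding w1_def by simp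
  qed
  also have "\<dots> = (\<Sum>k. ennreal (4^(Suc k)) * emeasure lborel (cball (0::real^3) ((1/2)^k)))"
    by (subst nn_integral_cmult_indicator) auto
  also have "\<dots> \<le> (\<Sum>k. ennreal (32 * (1/2)^k))"
  proof (intro suminf_le summableI)
    fix k :: nat
    have "ennreal (4^(Suc k)) * emeasure lborel (cball (0::real^3) ((1/2)^k)) \<le> ennreal (4^(Suc k)) * ennreal (8 * ((1/2)^k)^3)"
      by (intro mult_left_mono cball_measure) auto
    also have "\<dots> = ennreal (4^(Suc k) * (8 * ((1/2)^k)^3))" by (rule ennreal_mult[symmetric]) auto
    also have "4^(Suc k) * (8 * ((1/2)^k)^3) = (32 * (1/2)^k :: real)"
      by (induction k) (simp_all add: field_simps)
    finally show "ennreal (4^(Suc k)) * emeasure lborel (cball (0::real^3) ((1/2)^k)) \<le> ennreal (32 * (1/2)^k)" .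
  qed
  also have "\<dots> = ennreal (\<Sum>k. 32 * (1/2)^k)"
    by (intro suminf_ennreal2 summable_mult summable_geometric) auto
  finally show ?thesis by (simp add: order_le_less_trans)
qed

lemma w2_int: "(\<integral>\<^sup>+x. w2 x \<partial>lborel) < \<infinity>"
proof -
  have "(\<integral>\<^sup>+x. w2 x \<partial>lborel) = (\<Sum>k. \<integral>\<^sup>+x. ennreal ((1/16)^k) * indicator (cball (0::real^3) (2^(Suc k))) x \<partial>lborel)"
  proof -
    have "(\<integral>\<^sup>+(x::real^3). (\<Sum>k. ennreal ((1/16)^k) * indicator (cball 0 (2^(Suc k))) x) \<partial>lborel) = (\<Sum>k. \<integral>\<^sup>+x. ennreal ((1/16)^k) * indicator (cball (0::real^3) (2^(Suc k))) x \<partial>lborel)"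
      by (rule nn_integral_suminf[where f="\<lambda>k x. ennreal ((1/16)^k) * indicator (cball 0 (2^(Suc k))) x"]) measurable
    then show ?thesis unfolding w2_def by simp
  qed
  also have "\<dots> = (\<Sum>k. ennreal ((1/16)^k) * emeasure lborel (cball (0::real^3) (2^(Suc k))))"
    by (subst nn_integral_cmult_indicator) auto
  also have "\<dots> \<le> (\<Sum>k. ennreal (64 * (1/2)^k))"
  proof (intro suminf_le summableI)
    fix k :: nat
    have "ennreal ((1/16)^k) * emeasure lborel (cball (0::real^3) (2^(Suc k))) \<le> ennreal ((1/16)^k) * ennreal (8 * (2^(Suc k))^3)"
      by (intro mult_left_mono cball_measure) auto
    also have "\<dots> = ennreal ((1/16)^k * (8 * (2^(Suc k))^3))" by (rule ennreal_mult[symmetric]) auto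
    also have "(1/16)^k * (8 * (2^(Suc k))^3) = (64 * (1/2)^k :: real)"
      by (induction k) (simp_all add: field_simps)
    finally show "ennreal ((1/16)^k) * emeasure lborel (cball (0::real^3) (2^(Suc k))) \<le> ennreal (64 * (1/2)^k)" .
  qed
  also have "\<dots> = ennreal (\<Sum>k. 64 * (1/2)^k)"
    by (intro suminf_ennreal2 summable_mult summable_geometric) auto
  finally show ?thesis by (simp add: order_le_less_trans)
qed

lemma G_sq_le_w:
  assumes "lam > 0"
  shows "ennreal ((G lam x)\<^sup>2) \<le> ennreal (max 1 (1/lam)) * (w1 x + w2 x)"
proof (cases "x = 0")
  case True then show ?thesis by (simp add: G_def)
next
  case False
  define r where "r = norm x"
  have r: "r > 0" using False r_def by auto
  have M1: "ennreal 1 \<le> ennreal (max 1 (1/lam))" by simp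
  show ?thesis
  proof (cases "r < 1")
    case True
    obtain j :: nat where j: "(1/2)^(Suc j) < r" "r \<le> (1/2)^j" using dyadic_small[OF r True] by blast
    have "(G lam x)\<^sup>2 \<le> 1 / r\<^sup>2" using G_sq_le(1)[OF assms False] r_def by simp
    also have "1 / r\<^sup>2 \<le> 4^(Suc j)"
    proof -
      have "((1/2)^(Suc j))\<^sup>2 \<le> r\<^sup>2" using j(1) by (intro power_mono) auto
      moreover have "((1/2::real)^(Suc j))\<^sup>2 = ((1/2)\<^sup>2)^(Suc j)" by (metis power_mult mult.commute)
      moreover have "(1/2::real)\<^sup>2 = 1/4" by (simp add: power2_eq_square)
      ultimately have "(1/4)^(Suc j) \<le> r\<^sup>2" by metis
      then show ?thesis using r by (simp add: field_simps power_one_over)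
    qed
    finally have "ennreal ((G lam x)\<^sup>2) \<le> ennreal (4^(Suc j)) * indicator (cball 0 ((1/2)^j)) x"
      using j r_def by (simp add: indicator_def ennreal_leI)
    also have "\<dots> \<le> w1 x" unfolding w1_def by (rule ennreal_term_le_suminf[where f="\<lambda>k. ennreal (4^(Suc k)) * indicator (cball 0 ((1/2)^k)) x"])
    also have "\<dots> \<le> w1 x + w2 x" by simp
    also have "\<dots> = ennreal 1 * (w1 x + w2 x)" by simp
    also have "\<dots> \<le> ennreal (max 1 (1/lam)) * (w1 x + w2 x)" by (intro mult_right_mono M1) auto
    finally show ?thesis .
  next
    case False
    then have r1: "1 \<le> r" by simp
    obtain k :: nat where k: "2^k \<le> r" "r < 2^(Suc k)" using dyadic_large[OF r1] by blast
    have "(G lam x)\<^sup>2 \<le> (1/lam) / r^4" using G_sq_le(2)[OF assms \<open>x \<noteq> 0\<close>] r_def by simp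
    also have "\<dots> \<le> max 1 (1/lam) * (1/16)^k"
    proof -
      have "(2^k)^4 \<le> r^4" using k(1) by (intro power_mono) auto
      moreover have "((2::real)^k)^4 = (2^4)^k" by (metis power_mult mult.commute)
      moreover have "(2::real)^4 = 16" by simp
      ultimately have "16^k \<le> r^4" by metis
      then have "1 / r^4 \<le> (1/16)^k" using r by (simp add: field_simps power_one_over)
      then have "(1/lam) * (1 / r^4) \<le> max 1 (1/lam) * (1/16)^k"
        using assms by (intro mult_mono) auto
      then show ?thesis by simp
    qed
    finally have "ennreal ((G lam x)\<^sup>2) \<le> ennreal (max 1 (1/lam)) * (ennreal ((1/16)^k) * indicator (cball 0 (2^(Suc k))) x)"
      using k r_def by (simp add: indicator_def ennreal_leI ennreal_mult[symmetric])
    also have "\<dots> \<le> ennreal (max 1 (1/lam)) * w2 x" unfolding w2_def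
      by (intro mult_left_mono ennreal_term_le_suminf[where f="\<lambda>k. ennreal ((1/16)^k) * indicator (cball 0 (2^(Suc k))) x"]) auto
    also have "\<dots> \<le> ennreal (max 1 (1/lam)) * (w1 x + w2 x)" by (intro mult_left_mono) auto
    finally show ?thesis .
  qed
qed

lemma G_sq_integrable:
  assumes "lam > 0"
  shows "integrable lborel (\<lambda>x. (G lam x)\<^sup>2)"
proof (subst integrable_iff_bounded, intro conjI)
  show "(\<lambda>x. (G lam x)\<^sup>2) \<in> borel_measurable lborel" by measurable
  have "(\<integral>\<^sup>+x. ennreal (norm ((G lam x)\<^sup>2)) \<partial>lborel) \<le> (\<integral>\<^sup>+x. ennreal (max 1 (1/lam)) * (w1 x + w2 x) \<partial>lborel)"
    by (intro nn_integral_mono) (simp add: G_sq_le_w[OF assms])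
  also have "\<dots> = ennreal (max 1 (1/lam)) * ((\<integral>\<^sup>+x. w1 x \<partial>lborel) + (\<integral>\<^sup>+x. w2 x \<partial>lborel))"
    by (simp add: nn_integral_cmult nn_integral_add)
  also have "\<dots> < \<infinity>" using w1_int w2_int by (simp add: ennreal_mult_less_top)
  finally show "(\<integral>\<^sup>+x. ennreal (norm ((G lam x)\<^sup>2)) \<partial>lborel) < \<infinity>" .
qed

lemma nn_integral_translate:
  fixes f :: "'a::euclidean_space \<Rightarrow> ennreal"
  assumes [measurable]: "f \<in> borel_measurable borel"
  shows "(\<integral>\<^sup>+x. f (x - h) \<partial>lborel) = (\<integral>\<^sup>+x. f x \<partial>lborel)"
proof -
  have "(\<integral>\<^sup>+x. f x \<partial>lborel) = (\<integral>\<^sup>+x. f x \<partial>(distr lborel borel ((+) (-h))))"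
    by (simp add: lborel_distr_plus)
  also have "\<dots> = (\<integral>\<^sup>+x. f (-h + x) \<partial>lborel)"
    by (rule nn_integral_distr) auto
  finally show ?thesis by simp
qed

definition Gsq_int :: "real \<Rightarrow> ennreal" where
  "Gsq_int lam = (\<integral>\<^sup>+x. ennreal ((G lam x)\<^sup>2) \<partial>lborel)"

lemma Gsq_int_finite: "lam > 0 \<Longrightarrow> Gsq_int lam < \<infinity>"
  using G_sq_integrable[of lam] unfolding Gsq_int_def
  by (simp add: integrable_iff_bounded)

definition Fd :: "real \<Rightarrow> real^3 \<Rightarrow> ennreal" where
  "Fd lam h = (\<integral>\<^sup>+x. ennreal ((G lam (x - h) - G lam x)\<^sup>2) \<partial>lborel)"

lemma sq_diff_le_sum: "0 \<le> (a::real) \<Longrightarrow> 0 \<le> b \<Longrightarrow> (a - b)\<^sup>2 \<le> a\<^sup>2 + b\<^sup>2"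
  by (simp add: power2_eq_square algebra_simps)

lemma sq_diff_le_abs: "0 \<le> (a::real) \<Longrightarrow> 0 \<le> b \<Longrightarrow> (a - b)\<^sup>2 \<le> \<bar>a\<^sup>2 - b\<^sup>2\<bar>"
proof -
  assume a: "0 \<le> a" and b: "0 \<le> b"
  have "(a - b)\<^sup>2 = \<bar>a - b\<bar> * \<bar>a - b\<bar>" by (simp add: power2_eq_square abs_mult_self_eq)
  also have "\<dots> \<le> \<bar>a - b\<bar> * (a + b)" using a b by (intro mult_left_mono) auto
  also have "\<dots> = \<bar>(a - b) * (a + b)\<bar>" using a b by (simp add: abs_mult)
  also have "\<dots> = \<bar>a\<^sup>2 - b\<^sup>2\<bar>" by (simp add: power2_eq_square algebra_simps)
  finally show ?thesis .
qed

lemma Fd_bound: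
  assumes "lam > 0"
  shows "Fd lam h \<le> 2 * Gsq_int lam"
proof -
  have "Fd lam h \<le> (\<integral>\<^sup>+x. ennreal ((G lam (x - h))\<^sup>2) + ennreal ((G lam x)\<^sup>2) \<partial>lborel)"
    unfolding Fd_def
    by (intro nn_integral_mono) (simp add: ennreal_plus[symmetric] del: ennreal_plus ennreal_plus, intro ennreal_leI sq_diff_le_sum G_nonneg assms)
  also have "\<dots> = (\<integral>\<^sup>+x. ennreal ((G lam (x - h))\<^sup>2) \<partial>lborel) + Gsq_int lam"
    unfolding Gsq_int_def by (rule nn_integral_add) auto
  also have "(\<integral>\<^sup>+x. ennreal ((G lam (x - h))\<^sup>2) \<partial>lborel) = Gsq_int lam"
    unfolding Gsq_int_def by (rule nn_integral_translate[where f="\<lambda>x. ennreal ((G lam x)\<^sup>2)"]) measurable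
  finally show ?thesis by (simp add: mult_2)
qed

lemma Fd_lim:
  assumes "lam > 0" and X: "X \<longlonglongrightarrow> 0"
  shows "(\<lambda>n. Fd lam (X n)) \<longlonglongrightarrow> 0"
proof -
  have int: "integrable lborel (\<lambda>x. (G lam x)\<^sup>2)" by (rule G_sq_integrable[OF assms(1)])
  have tr: "(\<integral>\<^sup>+x. ennreal (norm ((G lam (x - X n))\<^sup>2)) \<partial>lborel) = (\<integral>\<^sup>+x. ennreal (norm ((G lam x)\<^sup>2)) \<partial>lborel)" for n
    by (rule nn_integral_translate[where f="\<lambda>x. ennreal (norm ((G lam x)\<^sup>2))"]) measurable
  have ae: "AE x in lborel. (\<lambda>n. (G lam (x - X n))\<^sup>2) \<longlonglongrightarrow> (G lam x)\<^sup>2"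
    using AE_lborel_singleton[of 0]
  proof eventually_elim
    case (elim x)
    have "(\<lambda>n. x - X n) \<longlonglongrightarrow> x - 0" by (intro tendsto_intros X)
    then have "(\<lambda>n. G lam (x - X n)) \<longlonglongrightarrow> G lam x"
      using isCont_tendsto_compose[OF G_cont[OF elim]] by simp
    then show ?case by (intro tendsto_intros)
  qed
  have S: "(\<lambda>n. \<integral>\<^sup>+ x. norm ((G lam (x - X n))\<^sup>2 - (G lam x)\<^sup>2) \<partial>lborel) \<longlonglongrightarrow> 0"
    by (rule Scheffe_lemma2[OF _ int ae]) (use tr in auto)
  show ?thesis
  proof (rule tendsto_sandwich[OF _ _ tendsto_const S])
    show "\<forall>\<^sub>F n in sequentially. 0 \<le> Fd lam (X n)" by simp
    show "\<forall>\<^sub>F n in sequentially. Fd lam (X n) \<le> (\<integral>\<^sup>+ x. norm ((G lam (x - X n))\<^sup>2 - (G lam x)\<^sup>2) \<partial>lborel)"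
      unfolding Fd_def
      by (intro always_eventually allI nn_integral_mono) (simp add: ennreal_leI sq_diff_le_abs G_nonneg assms)
  qed
qed

lemma Fd_meas[measurable]: "Fd lam \<in> borel_measurable borel"
  unfolding Fd_def by measurable

lemma Phi_lim:
  assumes lam: "lam > 0" and V: "integrable lborel V"
  shows "((\<lambda>eps. \<integral>\<^sup>+y. ennreal \<bar>V y\<bar> * Fd lam (eps *\<^sub>R y) \<partial>lborel) \<longlongrightarrow> 0) (at_right 0)"
  unfolding tendsto_at_iff_sequentially comp_def
proof (intro allI impI)
  fix X :: "nat \<Rightarrow> real"
  assume "\<forall>i. X i \<in> {0<..} - {0}" and X: "X \<longlonglongrightarrow> 0"
  have [measurable]: "V \<in> borel_measurable lborel" using V by auto
  have fin: "(\<integral>\<^sup>+y. ennreal \<bar>V y\<bar> \<partial>lborel) < \<infinity>"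
    using V by (simp add: integrable_iff_bounded)
  have "(\<lambda>i. \<integral>\<^sup>+y. ennreal \<bar>V y\<bar> * Fd lam (X i *\<^sub>R y) \<partial>lborel) \<longlonglongrightarrow> (\<integral>\<^sup>+(y::real^3). 0 \<partial>lborel)"
  proof (rule nn_integral_dominated_convergence[where u="\<lambda>i y. ennreal \<bar>V y\<bar> * Fd lam (X i *\<^sub>R y)" and u'="\<lambda>y. 0" and w="\<lambda>y. ennreal \<bar>V y\<bar> * (2 * Gsq_int lam)"])
    show "\<And>i. (\<lambda>y. ennreal \<bar>V y\<bar> * Fd lam (X i *\<^sub>R y)) \<in> borel_measurable lborel" by measurable
    show "(\<lambda>y. 0) \<in> borel_measurable lborel" by simp
    show "(\<lambda>y. ennreal \<bar>V y\<bar> * (2 * Gsq_int lam)) \<in> borel_measurable lborel" by measurable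
    show "AE y in lborel. ennreal \<bar>V y\<bar> * Fd lam (X j *\<^sub>R y) \<le> ennreal \<bar>V y\<bar> * (2 * Gsq_int lam)" for j
      by (intro AE_I2 mult_left_mono Fd_bound lam) auto
    show "(\<integral>\<^sup>+y. ennreal \<bar>V y\<bar> * (2 * Gsq_int lam) \<partial>lborel) < \<infinity>"
      using fin Gsq_int_finite[OF lam] by (simp add: nn_integral_multc ennreal_mult_less_top)
    show "AE y in lborel. (\<lambda>i. ennreal \<bar>V y\<bar> * Fd lam (X i *\<^sub>R y)) \<longlonglongrightarrow> 0"
    proof (intro AE_I2)
      fix y :: "real^3"
      have "(\<lambda>i. X i *\<^sub>R y) \<longlonglongrightarrow> 0 *\<^sub>R y" by (intro tendsto_intros X)
      then have "(\<lambda>i. Fd lam (X i *\<^sub>R y)) \<longlonglongrightarrow> 0" using Fd_lim[OF lam] by simp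
      then have "(\<lambda>i. ennreal \<bar>V y\<bar> * Fd lam (X i *\<^sub>R y)) \<longlonglongrightarrow> ennreal \<bar>V y\<bar> * 0"
        by (intro ennreal_tendsto_cmult) auto
      then show "(\<lambda>i. ennreal \<bar>V y\<bar> * Fd lam (X i *\<^sub>R y)) \<longlonglongrightarrow> 0" by simp
    qed
  qed
  then show "(\<lambda>i. \<integral>\<^sup>+y. ennreal \<bar>V y\<bar> * Fd lam (X i *\<^sub>R y) \<partial>lborel) \<longlonglongrightarrow> 0" by simp
qed

lemma hsA_eq:
  assumes V: "integrable lborel V"
  shows "hs_norm_sq (\<lambda>x y. A_kernel V lam eps x y - rank_one_kernel (G lam) (\<lambda>y. sqrt \<bar>V y\<bar>) x y)
       = (\<integral>\<^sup>+y. ennreal \<bar>V y\<bar> * Fd lam (eps *\<^sub>R y) \<partial>lborel)"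
proof -
  have [measurable]: "V \<in> borel_measurable lborel" using V by auto
  define f where "f = (\<lambda>p::(real^3) \<times> (real^3). ennreal ((A_kernel V lam eps (fst p) (snd p)
      - rank_one_kernel (G lam) (\<lambda>y. sqrt \<bar>V y\<bar>) (fst p) (snd p))\<^sup>2))"
  have fm: "f \<in> borel_measurable (lborel \<Otimes>\<^sub>M lborel)"
    unfolding f_def A_kernel_def rank_one_kernel_def by measurable
  have "hs_norm_sq (\<lambda>x y. A_kernel V lam eps x y - rank_one_kernel (G lam) (\<lambda>y. sqrt \<bar>V y\<bar>) x y)
      = integral\<^sup>N (lborel \<Otimes>\<^sub>M lborel) f"
    unfolding hs_norm_sq_def f_def lborel_prod ..
  also have "\<dots> = (\<integral>\<^sup>+y. (\<integral>\<^sup>+x. f (x, y) \<partial>lborel) \<partial>lborel)"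
    by (rule lborel_pair.nn_integral_snd[OF fm, symmetric])
  also have "\<dots> = (\<integral>\<^sup>+y. ennreal \<bar>V y\<bar> * Fd lam (eps *\<^sub>R y) \<partial>lborel)"
  proof (intro nn_integral_cong)
    fix y :: "real^3"
    have "f (x, y) = ennreal \<bar>V y\<bar> * ennreal ((G lam (x - eps *\<^sub>R y) - G lam x)\<^sup>2)" for x
    proof -
      have "(G lam (x - eps *\<^sub>R y) * sqrt \<bar>V y\<bar> - G lam x * sqrt \<bar>V y\<bar>)\<^sup>2
          = ((G lam (x - eps *\<^sub>R y) - G lam x) * sqrt \<bar>V y\<bar>)\<^sup>2"
        by (simp add: left_diff_distrib)
      also have "\<dots> = (G lam (x - eps *\<^sub>R y) - G lam x)\<^sup>2 * (sqrt \<bar>V y\<bar>)\<^sup>2"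
        by (rule power_mult_distrib)
      also have "\<dots> = \<bar>V y\<bar> * (G lam (x - eps *\<^sub>R y) - G lam x)\<^sup>2" by simp
      finally have "(G lam (x - eps *\<^sub>R y) * sqrt \<bar>V y\<bar> - G lam x * sqrt \<bar>V y\<bar>)\<^sup>2
          = \<bar>V y\<bar> * (G lam (x - eps *\<^sub>R y) - G lam x)\<^sup>2" .
      then show ?thesis unfolding f_def A_kernel_def rank_one_kernel_def
        by (simp add: ennreal_mult)
    qed
    then have "(\<integral>\<^sup>+x. f (x, y) \<partial>lborel) = ennreal \<bar>V y\<bar> * (\<integral>\<^sup>+x. ennreal ((G lam (x - eps *\<^sub>R y) - G lam x)\<^sup>2) \<partial>lborel)"
      by (simp add: nn_integral_cmult)
    then show "(\<integral>\<^sup>+x. f (x, y) \<partial>lborel) = ennreal \<bar>V y\<bar> * Fd lam (eps *\<^sub>R y)"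
      unfolding Fd_def by simp
  qed
  finally show ?thesis .
qed

lemma hsC_eq:
  assumes V: "integrable lborel V"
  shows "hs_norm_sq (\<lambda>x y. C_kernel V lam eps x y - rank_one_kernel (\<lambda>x. sgn (V x) * sqrt \<bar>V x\<bar>) (G lam) x y)
       = (\<integral>\<^sup>+y. ennreal \<bar>V y\<bar> * Fd lam (eps *\<^sub>R y) \<partial>lborel)"
proof -
  have [measurable]: "V \<in> borel_measurable lborel" using V by auto
  define f where "f = (\<lambda>p::(real^3) \<times> (real^3). ennreal ((C_kernel V lam eps (fst p) (snd p)
      - rank_one_kernel (\<lambda>x. sgn (V x) * sqrt \<bar>V x\<bar>) (G lam) (fst p) (snd p))\<^sup>2))"
  have fm: "f \<in> borel_measurable (lborel \<Otimes>\<^sub>M lborel)"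
    unfolding f_def C_kernel_def rank_one_kernel_def by measurable
  have "hs_norm_sq (\<lambda>x y. C_kernel V lam eps x y - rank_one_kernel (\<lambda>x. sgn (V x) * sqrt \<bar>V x\<bar>) (G lam) x y)
      = integral\<^sup>N (lborel \<Otimes>\<^sub>M lborel) f"
    unfolding hs_norm_sq_def f_def lborel_prod ..
  also have "\<dots> = (\<integral>\<^sup>+x. (\<integral>\<^sup>+y. f (x, y) \<partial>lborel) \<partial>lborel)"
    by (rule lborel.nn_integral_fst[OF fm, symmetric])
  also have "\<dots> = (\<integral>\<^sup>+x. ennreal \<bar>V x\<bar> * Fd lam (eps *\<^sub>R x) \<partial>lborel)"
  proof (intro nn_integral_cong)
    fix x :: "real^3"
    have "f (x, y) = ennreal \<bar>V x\<bar> * ennreal ((G lam (y - eps *\<^sub>R x) - G lam y)\<^sup>2)" for y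
    proof -
      have s: "(sgn (V x))\<^sup>2 * \<bar>V x\<bar> = \<bar>V x\<bar>" by (cases "V x = 0") (auto simp: sgn_if)
      have "(sgn (V x) * sqrt \<bar>V x\<bar> * G lam (eps *\<^sub>R x - y) - sgn (V x) * sqrt \<bar>V x\<bar> * G lam y)\<^sup>2
          = ((sgn (V x) * sqrt \<bar>V x\<bar>) * (G lam (eps *\<^sub>R x - y) - G lam y))\<^sup>2"
        by (simp add: right_diff_distrib)
      also have "\<dots> = ((sgn (V x))\<^sup>2 * (sqrt \<bar>V x\<bar>)\<^sup>2) * (G lam (eps *\<^sub>R x - y) - G lam y)\<^sup>2"
        by (simp only: power_mult_distrib)
      also have "\<dots> = \<bar>V x\<bar> * (G lam (y - eps *\<^sub>R x) - G lam y)\<^sup>2"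
        using s by (simp add: G_minus[of lam "eps *\<^sub>R x" y])
      finally show ?thesis unfolding f_def C_kernel_def rank_one_kernel_def
        by (simp add: ennreal_mult)
    qed
    then have "(\<integral>\<^sup>+y. f (x, y) \<partial>lborel) = ennreal \<bar>V x\<bar> * (\<integral>\<^sup>+y. ennreal ((G lam (y - eps *\<^sub>R x) - G lam y)\<^sup>2) \<partial>lborel)"
      by (simp add: nn_integral_cmult)
    then show "(\<integral>\<^sup>+y. f (x, y) \<partial>lborel) = ennreal \<bar>V x\<bar> * Fd lam (eps *\<^sub>R x)"
      unfolding Fd_def by simp
  qed
  finally show ?thesis .
qed

theorem proposition3p3:
  fixes V :: "real^3 \<Rightarrow> real" and lam :: real
  assumes "integrable lborel V" and "lam > 0"
  shows "((\<lambda>eps. hs_norm_sq (\<lambda>x y. A_kernel V lam eps x y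
              - rank_one_kernel (G lam) (\<lambda>y. sqrt \<bar>V y\<bar>) x y)) \<longlongrightarrow> 0) (at_right 0) \<and>
         ((\<lambda>eps. hs_norm_sq (\<lambda>x y. C_kernel V lam eps x y
              - rank_one_kernel (\<lambda>x. sgn (V x) * sqrt \<bar>V x\<bar>) (G lam) x y)) \<longlongrightarrow> 0) (at_right 0)"
  unfolding hsA_eq[OF assms(1)] hsC_eq[OF assms(1)]
  using Phi_lim[OF assms(2,1)] by simp

end
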